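(* Let $n\ge2$ and let $A=T_n\langle S;T\rangle$ be a Boolean Toeplitz matrix with $S=\{s_1<\dots<s_{k_1}\}$, $T=\{t_1<\dots<t_{k_2}\}$ nonempty subsets of $\{1,\dots,n-1\}$, $\max S+\min T\le n$ and $\min S+\max T\le n$. Let $d=\gcd\{s+t: s\in S, t\in T\}$ and $d'=\gcd(d,s_1)$. Then (a) the matrix period of $A$ is $d/d'$; (b) the competition period of $A$ is $1$; (c) there is a permutation matrix $P$ such that, as $m\to\infty$, $P\,(A^m(A^T)^m)\,P^T$ converges to (i.e. is eventually equal to) the block diagonal matrix $\mathrm{diag}(J_{m_1},\dots,J_{m_d})$, where $J_{m_i}$ is the all-ones matrix of order $m_i=|\{v\in[n] : v\equiv i\pmod d\}|$.
   Context: Boolean arithmetic on $\{0,1\}$: $1+1=1$. $T_n\langle S;T\rangle$ is the $n\times n$ $(0,1)$-matrix whose $(i,j)$-entry is $1$ iff $j-i\in S$ or $i-j\in T$. The matrix period of $A$ is the smallest $p\ge1$ with $A^m=A^{m+p}$ for all sufficiently large $m$. The competition index $q$ of $A$ is the smallest positive integer such that $A^{q+i}(A^T)^{q+i}=A^{q+r+i}(A^T)^{q+r+i}$ for some $r\ge1$ and all $i\ge0$; the competition period is the smallest $p\ge1$ with $A^q(A^T)^q=A^{q+p}(A^T)^{q+p}$. *)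

theory Defs
  imports Main
begin

text \<open>Boolean n-by-n matrices with row/column indices in [n] = {1..n}, represented as
  functions nat => nat => bool; entries outside [n] x [n] are False.\<close>

type_synonym bmat = "nat \<Rightarrow> nat \<Rightarrow> bool"

definition toeplitz :: "nat \<Rightarrow> nat set \<Rightarrow> nat set \<Rightarrow> bmat" where
  "toeplitz n S T = (\<lambda>i j. i \<in> {1..n} \<and> j \<in> {1..n} \<and>
     ((int j - int i) \<in> int ` S \<or> (int i - int j) \<in> int ` T))"

definition bmult :: "nat \<Rightarrow> bmat \<Rightarrow> bmat \<Rightarrow> bmat" where
  "bmult n A B = (\<lambda>i j. i \<in> {1..n} \<and> j \<in> {1..n} \<and> (\<exists>k\<in>{1..n}. A i k \<and> B k j))"

definition bid :: "nat \<Rightarrow> bmat" where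
  "bid n = (\<lambda>i j. i \<in> {1..n} \<and> i = j)"

fun bpow :: "nat \<Rightarrow> bmat \<Rightarrow> nat \<Rightarrow> bmat" where
  "bpow n A 0 = bid n"
| "bpow n A (Suc m) = bmult n (bpow n A m) A"

definition btrans :: "bmat \<Rightarrow> bmat" where
  "btrans A = (\<lambda>i j. A j i)"

definition is_matrix_period :: "nat \<Rightarrow> bmat \<Rightarrow> nat \<Rightarrow> bool" where
  "is_matrix_period n A p \<longleftrightarrow>
     p \<ge> 1 \<and> (\<exists>M. \<forall>m\<ge>M. bpow n A m = bpow n A (m + p)) \<and>
     (\<forall>p'. 1 \<le> p' \<and> p' < p \<longrightarrow> \<not> (\<exists>M. \<forall>m\<ge>M. bpow n A m = bpow n A (m + p')))"

definition compm :: "nat \<Rightarrow> bmat \<Rightarrow> nat \<Rightarrow> bmat" where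
  "compm n A m = bmult n (bpow n A m) (bpow n (btrans A) m)"

definition is_competition_index :: "nat \<Rightarrow> bmat \<Rightarrow> nat \<Rightarrow> bool" where
  "is_competition_index n A q \<longleftrightarrow>
     q \<ge> 1 \<and> (\<exists>r\<ge>1. \<forall>i. compm n A (q + i) = compm n A (q + r + i)) \<and>
     (\<forall>q'. 1 \<le> q' \<and> q' < q \<longrightarrow>
        \<not> (\<exists>r\<ge>1. \<forall>i. compm n A (q' + i) = compm n A (q' + r + i)))"

definition is_competition_period :: "nat \<Rightarrow> bmat \<Rightarrow> nat \<Rightarrow> bool" where
  "is_competition_period n A p \<longleftrightarrow>
     (\<exists>q. is_competition_index n A q \<and> p \<ge> 1 \<and> compm n A q = compm n A (q + p) \<and>
        (\<forall>p'. 1 \<le> p' \<and> p' < p \<longrightarrow> compm n A q \<noteq> compm n A (q + p')))"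

text \<open>Block diagonal matrix diag(J_{ms 1}, ..., J_{ms d}) of order n: position i lies in
  block b, the least b with i <= ms 1 + ... + ms b.\<close>
definition block_of :: "(nat \<Rightarrow> nat) \<Rightarrow> nat \<Rightarrow> nat" where
  "block_of ms i = (LEAST b. i \<le> (\<Sum>c=1..b. ms c))"

definition blockdiag_ones :: "nat \<Rightarrow> (nat \<Rightarrow> nat) \<Rightarrow> bmat" where
  "blockdiag_ones n ms = (\<lambda>i j. i \<in> {1..n} \<and> j \<in> {1..n} \<and> block_of ms i = block_of ms j)"

end

theory Submission
  imports Defs "HOL-Computational_Algebra.Primes"
begin


lemma bpow_range: "bpow n A m i k \<Longrightarrow> i \<in> {1..n} \<and> k \<in> {1..n}"
  by (cases m) (auto simp: bid_def bmult_def)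

lemma bpow_concat:
  "bpow n A a i j \<Longrightarrow> bpow n A b j k \<Longrightarrow> bpow n A (a+b) i k"
proof (induction b arbitrary: k)
  case 0
  then show ?case by (simp add: bid_def)
next
  case (Suc b)
  from Suc.prems(2) obtain l where l: "l \<in> {1..n}" "bpow n A b j l" "A l k" "k \<in> {1..n}"
    by (auto simp: bmult_def)
  have "bpow n A (a+b) i l" using Suc.IH[OF Suc.prems(1) l(2)] .
  moreover have "i \<in> {1..n}" using bpow_range[OF Suc.prems(1)] by blast
  ultimately show ?case using l by (auto simp: bmult_def)
qed

lemma bpow_edge: "A p q \<Longrightarrow> p \<in> {1..n} \<Longrightarrow> q \<in> {1..n} \<Longrightarrow> bpow n A 1 p q"
  by (auto simp: bmult_def bid_def)

lemma bpow_zero: "p \<in> {1..n} \<Longrightarrow> bpow n A 0 p p"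
  by (simp add: bid_def)

lemma bpow_btrans: "bpow n (btrans A) m = btrans (bpow n A m)"
proof (induction m)
  case 0
  then show ?case by (auto simp: bid_def btrans_def fun_eq_iff)
next
  case (Suc m)
  have "bpow n A (Suc m) = bpow n A (1 + m)" by simp
  show ?case
  proof (rule ext, rule ext)
    fix i j
    show "bpow n (btrans A) (Suc m) i j = btrans (bpow n A (Suc m)) i j"
    proof
      assume "bpow n (btrans A) (Suc m) i j"
      then obtain l where l: "i \<in> {1..n}" "j \<in> {1..n}" "l \<in> {1..n}" "bpow n A m l i" "A j l"
        using Suc by (auto simp: bmult_def btrans_def)
      have "bpow n A (1 + m) j i" by (rule bpow_concat[OF bpow_edge[where A=A, OF l(5) l(2) l(3)] l(4)])
      then show "btrans (bpow n A (Suc m)) i j" by (simp add: btrans_def)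
    next
      assume "btrans (bpow n A (Suc m)) i j"
      hence h: "bpow n A (Suc m) j i" by (simp add: btrans_def)
      have "\<exists>l. A j l \<and> l \<in> {1..n} \<and> bpow n A kk l i" if "bpow n A (Suc kk) j i" for kk
        using that
      proof (induction kk arbitrary: i)
        case 0
        then show ?case by (auto simp: bmult_def bid_def)
      next
        case (Suc kk)
        have eq: "bpow n A (Suc (Suc kk)) = bmult n (bpow n A (Suc kk)) A" by (rule bpow.simps(2))
        from Suc.prems[unfolded eq bmult_def] obtain l where "bpow n A (Suc kk) j l" "A l i" "i \<in> {1..n}" "l \<in> {1..n}"
          by blast
        with Suc.IH obtain l' where "A j l'" "l' \<in> {1..n}" "bpow n A kk l' l" by blast
        have "bpow n A (Suc kk) l' i"
          unfolding bpow.simps bmult_def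
          using \<open>l' \<in> {1..n}\<close> \<open>A l i\<close> \<open>i \<in> {1..n}\<close> \<open>bpow n A kk l' l\<close> \<open>l \<in> {1..n}\<close> by blast
        then show ?case using \<open>A j l'\<close> \<open>l' \<in> {1..n}\<close> by blast
      qed
      from this[OF h] obtain l where "A j l" "l \<in> {1..n}" "bpow n A m l i" by blast
      then show "bpow n (btrans A) (Suc m) i j"
        using Suc bpow_range[OF h] by (auto simp: bmult_def btrans_def)
    qed
  qed
qed

lemma greedy:
  fixes W :: "nat \<Rightarrow> nat \<Rightarrow> nat \<Rightarrow> bool"
  assumes refl: "\<And>p. p \<in> {1..n} \<Longrightarrow> W 0 p p"
    and trans: "\<And>a b p q r. W a p q \<Longrightarrow> W b q r \<Longrightarrow> W (a+b) p r"
    and up: "\<And>p. 1 \<le> p \<Longrightarrow> p + x \<le> n \<Longrightarrow> W lu p (p + x)"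
    and dn: "\<And>p. p \<le> n \<Longrightarrow> y < p \<Longrightarrow> W ld p (p - y)"
    and xy: "x + y \<le> n"
  shows "p \<in> {1..n} \<Longrightarrow> int p + int u * int x - int w * int y \<in> {1..int n} \<Longrightarrow>
     W (u*lu + w*ld) p (nat (int p + int u * int x - int w * int y))"
proof (induction "u + w" arbitrary: u w p)
  case 0
  then show ?case using refl by simp
next
  case (Suc N)
  show ?case
  proof (cases "w > 0 \<and> y < p")
    case True
    then obtain w' where w': "w = Suc w'" by (cases w) auto
    have s: "W ld p (p - y)" using dn True Suc.prems by auto
    have "W (u*lu + w'*ld) (p - y) (nat (int (p - y) + int u * int x - int w' * int y))"
      using Suc.hyps(1)[of u w' "p - y"] Suc.prems True w' Suc.hyps(2)
      by (simp add: algebra_simps of_nat_diff Suc_le_eq)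
    from trans[OF s this] show ?thesis using True w'
      by (auto simp: algebra_simps of_nat_diff)
  next
    case False
    note F = False
    show ?thesis
    proof (cases "u > 0 \<and> p + x \<le> n")
      case True
      then obtain u' where u': "u = Suc u'" by (cases u) auto
      have s: "W lu p (p + x)" using up True Suc.prems by auto
      have "W (u'*lu + w*ld) (p + x) (nat (int (p + x) + int u' * int x - int w * int y))"
        using Suc.hyps(1)[of u' w "p + x"] Suc.prems True u' Suc.hyps(2)
        by (auto simp: algebra_simps)
      from trans[OF s this] show ?thesis using True u'
        by (auto simp: algebra_simps)
    next
      case False
      have "False"
      proof (cases "w > 0")
        case True
        with F have py: "p \<le> y" by auto
        show False
        proof (cases "u > 0")
          case True
          with False have "p + x > n" by auto
          with py xy show False by auto
        next
          case False
          hence "u = 0" by simp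
          have "int w * int y \<ge> int y" using True by (simp add: mult_le_cancel_right1)
          with Suc.prems \<open>u = 0\<close> py show False by auto
        qed
      next
        case False
        hence "w = 0" by simp
        with Suc.hyps(2) have "u > 0" by simp
        with \<open>\<not> (0 < u \<and> p + x \<le> n)\<close> have "p + x > n" by auto
        moreover have "int u * int x \<ge> int x" using \<open>u > 0\<close>
          by (simp add: mult_le_cancel_right1)
        ultimately show False using Suc.prems \<open>w = 0\<close> by auto
      qed
      then show ?thesis ..
    qed
  qed
qed


lemma mult_in:
  fixes X :: "nat set" and a k :: nat
  assumes "0 \<in> X" "\<forall>a\<in>X. \<forall>b\<in>X. a+b \<in> X" "a \<in> X"
  shows "k*a \<in> X"
  using assms by (induction k) auto

lemma frob:
  fixes F :: "nat set"
  assumes "finite F"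
  shows "\<exists>K. \<forall>X. 0 \<in> X \<and> (\<forall>a\<in>X. \<forall>b\<in>X. a+b \<in> X) \<and> F \<subseteq> X \<longrightarrow>
             (\<forall>m\<ge>K. Gcd F dvd m \<longrightarrow> m \<in> X)"
  using assms
proof (induction rule: finite_induct)
  case empty
  show ?case
  proof (intro exI[of _ 0] allI impI)
    fix X :: "nat set" and m :: nat
    assume "0 \<in> X \<and> (\<forall>a\<in>X. \<forall>b\<in>X. a+b \<in> X) \<and> {} \<subseteq> X" "0 \<le> m" "Gcd {} dvd m"
    then show "m \<in> X" by simp
  qed
next
  case (insert x F)
  from insert.IH obtain K where K0: "\<forall>X. 0 \<in> X \<and> (\<forall>a\<in>X. \<forall>b\<in>X. a+b \<in> X) \<and> F \<subseteq> X \<longrightarrow>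
             (\<forall>m\<ge>K. Gcd F dvd m \<longrightarrow> m \<in> X)" by (rule exE)
  have K: "m \<in> X" if "0 \<in> X" "\<forall>a\<in>X. \<forall>b\<in>X. a+b \<in> X" "F \<subseteq> X" "m \<ge> K" "Gcd F dvd m" for X m
  proof -
    have c: "0 \<in> X \<and> (\<forall>a\<in>X. \<forall>b\<in>X. a+b \<in> X) \<and> F \<subseteq> X" using that(1-3) by (intro conjI)
    show ?thesis using K0[rule_format, OF c that(4) that(5)] .
  qed
  define G1 where "G1 = Gcd F"
  show ?case
  proof (cases "x = 0")
    case True
    show ?thesis
    proof (intro exI[of _ K] allI impI)
      fix X m assume H: "0 \<in> X \<and> (\<forall>a\<in>X. \<forall>b\<in>X. a+b \<in> X) \<and> insert x F \<subseteq> X"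
          "K \<le> m" "Gcd (insert x F) dvd m"
      have "Gcd F dvd m" using H(3) True by simp
      have H0: "0 \<in> X" and Hc: "\<forall>a\<in>X. \<forall>b\<in>X. a+b \<in> X" and HF: "F \<subseteq> X"
          using H(1) by auto
      show "m \<in> X" by (rule K[OF H0 Hc HF H(2) \<open>Gcd F dvd m\<close>])
    qed
  next
    case xnz: False
    show ?thesis
    proof (cases "G1 = 0")
      case True
      show ?thesis
      proof (intro exI[of _ 0] allI impI)
        fix X m assume H: "0 \<in> X \<and> (\<forall>a\<in>X. \<forall>b\<in>X. a+b \<in> X) \<and> insert x F \<subseteq> X"
          "0 \<le> m" "Gcd (insert x F) dvd m"
        have e1: "Gcd (insert x F) = gcd x G1" unfolding G1_def by (rule Gcd_insert)
        have "gcd x G1 = x" using True by simp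
        then have "x dvd m" using H(3) e1 by simp
        then obtain c where "m = x * c" by (rule dvdE)
        hence mc: "m = c * x" by simp
        have H0: "0 \<in> X" and Hc: "\<forall>a\<in>X. \<forall>b\<in>X. a+b \<in> X" and Hx: "x \<in> X"
          using H(1) by auto
        have "c * x \<in> X" by (rule mult_in[OF H0 Hc Hx])
        then show "m \<in> X" using mc by simp
      qed
    next
      case G1nz: False
      obtain u v where uv: "x * u = G1 * v + gcd x G1" using bezout_nat[OF xnz] by blast
      define G where "G = gcd x G1"
      have Gpos: "G > 0" using xnz by (simp add: G_def)
      have GG1: "G dvd G1" by (simp add: G_def)
      have uvi: "int G = int x * int u - int G1 * int v"
        using arg_cong[OF uv, of int] by (simp add: G_def)
      show ?thesis
      proof (intro exI[of _ "K + G1*u*x"] allI impI)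
        fix X m assume H: "0 \<in> X \<and> (\<forall>a\<in>X. \<forall>b\<in>X. a+b \<in> X) \<and> insert x F \<subseteq> X"
          "K + G1*u*x \<le> m" "Gcd (insert x F) dvd m"
        have "Gcd (insert x F) = G" by (simp add: G_def G1_def)
        hence Gm: "G dvd m" using H(3) by simp
        define q where "q = m div G1"
        define r where "r = m mod G1"
        have mqr: "m = q * G1 + r" unfolding q_def r_def by simp
        have "G dvd r" unfolding r_def using Gm GG1 by (simp add: dvd_mod)
        define r' where "r' = r div G"
        have rr: "r = r' * G" unfolding r'_def using \<open>G dvd r\<close> by simp
        have "r < G1" unfolding r_def using G1nz by simp
        have "r' \<le> r" unfolding r'_def by simp
        hence r'lt: "r' < G1" using \<open>r < G1\<close> by simp
        have mi: "int m = int q * int G1 + int r' * int G" using mqr rr by simp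
        have ii: "int m = (int q - int r' * int v) * int G1 + int r' * int u * int x"
          unfolding mi uvi by (simp add: algebra_simps)
        have b4: "r' * u * x \<le> G1 * u * x" using r'lt by (simp add: mult_le_mono1)
        have le: "r' * u * x \<le> m" using H(2) b4 by linarith
        define A1 where "A1 = m - r' * u * x"
        have "A1 \<ge> K" using H(2) b4 unfolding A1_def by linarith
        have "int A1 = (int q - int r' * int v) * int G1"
          unfolding A1_def using ii le by (simp add: of_nat_diff)
        hence "int G1 dvd int A1" by simp
        hence "G1 dvd A1" by simp
        have H0: "0 \<in> X" and Hc: "\<forall>a\<in>X. \<forall>b\<in>X. a+b \<in> X" and HF: "F \<subseteq> X" and Hx: "x \<in> X"
          using H(1) by auto
        have "A1 \<in> X" by (rule K[OF H0 Hc HF \<open>A1 \<ge> K\<close>]) (use \<open>G1 dvd A1\<close> in \<open>simp add: G1_def\<close>)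
        moreover have "(r' * u) * x \<in> X" by (rule mult_in[OF H0 Hc Hx])
        ultimately have "A1 + r' * u * x \<in> X" using Hc by simp
        then show "m \<in> X" using le unfolding A1_def by simp
      qed
    qed
  qed
qed


lemma pair_pp:
  fixes a b p k j :: nat
  assumes p: "prime p" and k: "k \<ge> 1" and L: "p^k dvd (a div gcd a b + b div gcd a b)"
    and a: "a > 0" and j1: "p^j dvd a" and j2: "\<not> p^(Suc j) dvd a"
  shows "p^j dvd b \<and> \<not> p^(Suc j) dvd b \<and> p^(k+j) dvd (a+b)"
proof -
  define G where "G = gcd a b"
  define a' where "a' = a div G"
  define b' where "b' = b div G"
  have Gpos: "G > 0" using a by (simp add: G_def)
  have aa: "a = G * a'" by (simp add: G_def a'_def)
  have bb: "b = G * b'" by (simp add: G_def b'_def)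
  have cop: "coprime a' b'" using div_gcd_coprime[of a b] a by (simp add: a'_def b'_def G_def)
  have "p dvd p^k" using k by (simp add: dvd_power)
  moreover have "p^k dvd a' + b'" using L by (simp add: a'_def b'_def G_def)
  ultimately have pab: "p dvd a' + b'" by (rule dvd_trans)
  have na: "\<not> p dvd a'"
  proof
    assume "p dvd a'"
    hence "p dvd b'" using pab by (simp add: dvd_add_right_iff)
    have "is_unit p" by (rule coprime_common_divisor[OF cop \<open>p dvd a'\<close> \<open>p dvd b'\<close>])
    with p show False by (simp add: not_prime_unit)
  qed
  have nb: "\<not> p dvd b'"
  proof
    assume "p dvd b'"
    hence "p dvd a'" using pab by (simp add: dvd_add_left_iff)
    with na show False by simp
  qed
  have ca: "coprime (p^i) a'" for i using prime_imp_coprime[OF p na] by simp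
  have cb: "coprime (p^i) b'" for i using prime_imp_coprime[OF p nb] by simp
  have jG: "p^j dvd G" using j1 aa coprime_dvd_mult_left_iff[OF ca[of j], of G] by simp
  have njG: "\<not> p^(Suc j) dvd G"
  proof
    assume "p^(Suc j) dvd G"
    hence "p^(Suc j) dvd G * a'" by (rule dvd_mult2)
    with j2 aa show False by simp
  qed
  have 1: "p^j dvd b" using jG bb by simp
  have 2: "\<not> p^(Suc j) dvd b" using njG bb coprime_dvd_mult_left_iff[OF cb[of "Suc j"], of G] by simp
  have "p^j * p^k dvd G * (a' + b')" using jG \<open>p^k dvd a' + b'\<close> by (rule mult_dvd_mono)
  moreover have "G * (a' + b') = a + b" using aa bb by (simp add: algebra_simps)
  ultimately have 3: "p^(k+j) dvd (a+b)" by (simp add: power_add mult.commute)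
  show ?thesis using 1 2 3 by blast
qed

lemma nt_main:
  fixes S T :: "nat set" and s1 t1 e :: nat
  assumes fin: "finite S" "finite T" and s1: "s1 \<in> S" and t1: "t1 \<in> T"
    and pos: "0 \<notin> S" "0 \<notin> T" and e: "e > 0"
    and h1: "\<forall>y\<in>T. e dvd (s1 div gcd s1 y + y div gcd s1 y)"
    and h2: "\<forall>x\<in>S. e dvd (x div gcd x t1 + t1 div gcd x t1)"
  shows "e dvd (Gcd {s + t | s t. s \<in> S \<and> t \<in> T} div gcd (Gcd {s + t | s t. s \<in> S \<and> t \<in> T}) s1)"
proof -
  define D where "D = {s + t | s t. s \<in> S \<and> t \<in> T}"
  define d where "d = Gcd D"
  define g where "g = d div gcd d s1"
  have s1pos: "s1 > 0" using s1 pos by (cases s1) auto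
  have t1pos: "t1 > 0" using t1 pos by (cases t1) auto
  have "s1 + t1 \<in> D" using s1 t1 by (auto simp: D_def)
  hence "d dvd s1 + t1" by (simp add: d_def)
  have dnz: "d \<noteq> 0"
  proof
    assume "d = 0"
    with \<open>d dvd s1 + t1\<close> have "s1 + t1 = 0" by simp
    with s1pos show False by simp
  qed
  have dg: "d = gcd d s1 * g" by (simp add: g_def)
  have gnz: "g \<noteq> 0"
  proof
    assume "g = 0"
    with dg have "d = 0" by simp
    with dnz show False by simp
  qed
  show ?thesis unfolding D_def[symmetric] d_def[symmetric] g_def[symmetric]
  proof (rule multiplicity_le_imp_dvd)
    show "e \<noteq> 0" using e by simp
    fix p :: nat assume p: "prime p"
    define k where "k = multiplicity p e"
    show "multiplicity p e \<le> multiplicity p g"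
    proof (cases "k = 0")
      case True then show ?thesis by (simp add: k_def)
    next
      case False
      hence k1: "k \<ge> 1" by simp
      have pke: "p^k dvd e" by (simp add: k_def multiplicity_dvd)
      define j where "j = multiplicity p s1"
      have j1: "p^j dvd s1" by (simp add: j_def multiplicity_dvd)
      have j2: "\<not> p^(Suc j) dvd s1"
      proof
        assume "p^(Suc j) dvd s1"
        hence "Suc j \<le> multiplicity p s1"
          using s1pos p by (intro multiplicity_geI) (auto simp: not_prime_unit)
        thus False by (simp add: j_def)
      qed
      have fam1: "p^j dvd y \<and> \<not> p^(Suc j) dvd y \<and> p^(k+j) dvd (s1+y)" if "y \<in> T" for y
      proof -
        have "e dvd (s1 div gcd s1 y + y div gcd s1 y)" using h1 that by blast
        hence "p^k dvd (s1 div gcd s1 y + y div gcd s1 y)" by (rule dvd_trans[OF pke])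
        from pair_pp[OF p k1 this s1pos j1 j2] show ?thesis .
      qed
      have tj1: "p^j dvd t1" and tj2: "\<not> p^(Suc j) dvd t1" using fam1[OF t1] by auto
      have fam2: "p^(k+j) dvd (x + t1)" if "x \<in> S" for x
      proof -
        have "e dvd (x div gcd x t1 + t1 div gcd x t1)" using h2 that by blast
        hence "p^k dvd (x div gcd x t1 + t1 div gcd x t1)" by (rule dvd_trans[OF pke])
        moreover have "x div gcd x t1 + t1 div gcd x t1 = t1 div gcd t1 x + x div gcd t1 x"
          by (simp add: gcd.commute)
        ultimately have "p^k dvd (t1 div gcd t1 x + x div gcd t1 x)" by simp
        from pair_pp[OF p k1 this t1pos tj1 tj2] show ?thesis by (simp add: add.commute)
      qed
      have "p^(k+j) dvd z" if "z \<in> D" for z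
      proof -
        obtain x y where z: "z = x + y" "x \<in> S" "y \<in> T" using \<open>z \<in> D\<close> by (auto simp: D_def)
        have "p^(k+j) dvd (x + t1) + (s1 + y)" using fam2[OF z(2)] fam1[OF z(3)] by simp
        moreover have "(x + t1) + (s1 + y) = (x + y) + (s1 + t1)" by simp
        ultimately have "p^(k+j) dvd (x + y) + (s1 + t1)" by simp
        moreover have "p^(k+j) dvd (s1 + t1)" using fam1[OF t1] by simp
        ultimately show ?thesis using z(1) by (simp add: dvd_add_left_iff)
      qed
      hence pd: "p^(k+j) dvd d" unfolding d_def by (rule Gcd_greatest)
      define d' where "d' = gcd d s1"
      have "p^j dvd p^(k+j)" by (simp add: le_imp_power_dvd)
      hence "p^j dvd d" using pd by (rule dvd_trans)
      hence "p^j dvd d'" using j1 by (simp add: d'_def)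
      then obtain w where w: "d' = p^j * w" by (rule dvdE)
      have "\<not> p dvd w"
      proof
        assume "p dvd w"
        hence "p^(Suc j) dvd d'" using w by (simp add: mult_dvd_mono)
        hence "p^(Suc j) dvd s1" by (simp add: d'_def)
        with j2 show False by simp
      qed
      hence cw: "coprime (p^k) w" using prime_imp_coprime[OF p] by simp
      have "p^j * p^k dvd p^j * (w * g)" using pd dg w by (simp add: d'_def power_add mult.commute mult.left_commute)
      hence "p^k dvd w * g" using p by (simp add: prime_gt_0_nat)
      hence "p^k dvd g" using cw by (simp add: coprime_dvd_mult_right_iff)
      hence "k \<le> multiplicity p g"
        using gnz p by (intro multiplicity_geI) (auto simp: not_prime_unit)
      thus ?thesis by (simp add: k_def)
    qed
  qed
qed


locale tz =
  fixes n :: nat and S T :: "nat set"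
  assumes n2: "n \<ge> 2"
    and Sne: "S \<noteq> {}" and Ssub: "S \<subseteq> {1..n-1}" and Tne: "T \<noteq> {}" and Tsub: "T \<subseteq> {1..n-1}"
    and c1: "Max S + Min T \<le> n" and c2: "Min S + Max T \<le> n"
begin

abbreviation "A \<equiv> toeplitz n S T"
abbreviation "s1 \<equiv> Min S"
abbreviation "t1 \<equiv> Min T"
definition d :: nat where "d = Gcd {s + t | s t. s \<in> S \<and> t \<in> T}"
abbreviation "g \<equiv> d div gcd d s1"
abbreviation "R p q \<equiv> (\<exists>m. bpow n A m p q)"

lemma finS: "finite S" using Ssub finite_subset by blast
lemma finT: "finite T" using Tsub finite_subset by blast
lemma s1S: "s1 \<in> S" using finS Sne by simp
lemma t1T: "t1 \<in> T" using finT Tne by simp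
lemma S0: "0 \<notin> S" using Ssub by auto
lemma T0: "0 \<notin> T" using Tsub by auto
lemma s1pos: "s1 > 0" using s1S S0 by (cases s1) auto
lemma t1pos: "t1 > 0" using t1T T0 by (cases t1) auto
lemma xS: "x \<in> S \<Longrightarrow> x + t1 \<le> n" using Max_ge[OF finS, of x] c1 by simp
lemma yT: "y \<in> T \<Longrightarrow> s1 + y \<le> n" using Max_ge[OF finT, of y] c2 by simp
lemma s1t1: "s1 + t1 \<le> n" using yT[OF t1T] .
lemma s1le: "x \<in> S \<Longrightarrow> s1 \<le> x" using finS by simp
lemma t1le: "y \<in> T \<Longrightarrow> t1 \<le> y" using finT by simp

lemma d_dvd: "x \<in> S \<Longrightarrow> y \<in> T \<Longrightarrow> d dvd x + y"
  unfolding d_def by (rule Gcd_dvd) blast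

lemma d_pos: "d > 0"
proof -
  have "d dvd s1 + t1" using d_dvd[OF s1S t1T] .
  moreover have "s1 + t1 > 0" using s1pos by simp
  ultimately show ?thesis by (cases "d = 0") auto
qed

lemma d_le: "d \<le> n"
proof -
  have "d dvd s1 + t1" using d_dvd[OF s1S t1T] .
  hence "d \<le> s1 + t1" using s1pos by (simp add: dvd_imp_le)
  thus ?thesis using s1t1 by simp
qed

lemma congS: "x \<in> S \<Longrightarrow> int d dvd int x - int s1"
proof -
  assume x: "x \<in> S"
  have "int d dvd int (x + t1)" using d_dvd[OF x t1T] by (simp only: of_nat_dvd_iff)
  moreover have "int d dvd int (s1 + t1)" using d_dvd[OF s1S t1T] by (simp only: of_nat_dvd_iff)
  ultimately have "int d dvd int (x + t1) - int (s1 + t1)" by (rule dvd_diff)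
  thus ?thesis by simp
qed

lemma congT: "y \<in> T \<Longrightarrow> int d dvd int y + int s1"
proof -
  assume y: "y \<in> T"
  have "int d dvd int (s1 + y)" using d_dvd[OF s1S y] by (simp only: of_nat_dvd_iff)
  thus ?thesis by (simp add: add.commute)
qed

lemma edge_up: "x \<in> S \<Longrightarrow> 1 \<le> p \<Longrightarrow> p + x \<le> n \<Longrightarrow> A p (p + x)"
  unfolding toeplitz_def using S0 by auto

lemma edge_dn: "y \<in> T \<Longrightarrow> p \<le> n \<Longrightarrow> y < p \<Longrightarrow> A p (p - y)"
  unfolding toeplitz_def using T0 by (auto simp: of_nat_diff)

lemma step_up: "x \<in> S \<Longrightarrow> 1 \<le> p \<Longrightarrow> p + x \<le> n \<Longrightarrow> bpow n A 1 p (p + x)"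
  by (rule bpow_edge[where A=A, OF edge_up]) auto

lemma step_dn: "y \<in> T \<Longrightarrow> p \<le> n \<Longrightarrow> y < p \<Longrightarrow> bpow n A 1 p (p - y)"
  by (rule bpow_edge[where A=A, OF edge_dn]) auto

lemma necessity: "bpow n A m i k \<Longrightarrow> int d dvd int k - int i - int m * int s1"
proof (induction m arbitrary: k)
  case 0
  then show ?case by (simp add: bid_def)
next
  case (Suc m)
  from Suc.prems obtain l where l: "bpow n A m i l" "A l k" "l \<in> {1..n}" "k \<in> {1..n}"
    by (auto simp: bmult_def)
  have ih: "int d dvd int l - int i - int m * int s1" using Suc.IH[OF l(1)] .
  have "int d dvd int k - int l - int s1"
  proof -
    from l(2) have "(int k - int l) \<in> int ` S \<or> (int l - int k) \<in> int ` T"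
      by (simp add: toeplitz_def)
    then show ?thesis
    proof
      assume "(int k - int l) \<in> int ` S"
      then obtain x where "x \<in> S" "int k - int l = int x" by auto
      thus ?thesis using congS[of x] by simp
    next
      assume "(int l - int k) \<in> int ` T"
      then obtain y where y: "y \<in> T" "int l - int k = int y" by auto
      have "int k - int l - int s1 = - (int y + int s1)" using y(2) by linarith
      have h: "int d dvd - (int y + int s1)" using congT[OF y(1)] by (simp only: dvd_minus_iff)
      show ?thesis by (subst \<open>int k - int l - int s1 = - (int y + int s1)\<close>) (rule h)
    qed
  qed
  from dvd_add[OF ih this] show ?case by (simp add: algebra_simps)
qed

lemma R_trans: "R p q \<Longrightarrow> R q r \<Longrightarrow> R p r"
  using bpow_concat by blast

lemma closed_pair:
  assumes x: "x \<in> S" and y: "y \<in> T" and xy: "x + y \<le> n" and v: "v \<in> {1..n}"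
  shows "bpow n A (y div gcd x y + x div gcd x y) v v"
proof -
  define G where "G = gcd x y"
  have xpos: "x > 0" using x S0 by (cases x) auto
  have Gpos: "G > 0" using xpos by (simp add: G_def)
  have e: "int (y div G) * int x = int (x div G) * int y"
  proof -
    have "y div G * x = x div G * y"
      by (metis G_def dvd_div_mult gcd_dvd1 gcd_dvd2 mult.commute)
    thus ?thesis by (metis of_nat_mult)
  qed
  have "bpow n A ((y div G)*1 + (x div G)*1) v
          (nat (int v + int (y div G) * int x - int (x div G) * int y))"
    using greedy[where W="bpow n A" and n=n and x=x and y=y and lu=1 and ld=1,
       OF _ _ _ _ xy, of v "y div G" "x div G"]
      bpow_zero bpow_concat step_up[OF x] step_dn[OF y] v e by auto
  thus ?thesis using e by (simp add: G_def)
qed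

end


context tz
begin

definition Lset :: "nat set" where
  "Lset = (\<lambda>y. y div gcd s1 y + s1 div gcd s1 y) ` T \<union> (\<lambda>x. t1 div gcd x t1 + x div gcd x t1) ` S"

lemma Lset_fin: "finite Lset"
  unfolding Lset_def using finS finT by simp

lemma Lset_closed: "L \<in> Lset \<Longrightarrow> v \<in> {1..n} \<Longrightarrow> bpow n A L v v"
  unfolding Lset_def
  using closed_pair[OF s1S _ yT] closed_pair[OF _ t1T xS] by auto

lemma Lset_gcd_dvd: "Gcd Lset dvd g"
proof -
  define e where "e = Gcd Lset"
  have L0: "t1 div gcd s1 t1 + s1 div gcd s1 t1 \<in> Lset" unfolding Lset_def using t1T by blast
  have "s1 div gcd s1 t1 > 0" using s1pos by (simp add: div_greater_zero_iff)
  hence Lpos: "t1 div gcd s1 t1 + s1 div gcd s1 t1 > 0" by simp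
  have "e dvd t1 div gcd s1 t1 + s1 div gcd s1 t1" unfolding e_def by (rule Gcd_dvd[OF L0])
  hence epos: "e > 0" using Lpos by (cases "e = 0") auto
  have h1: "\<forall>y\<in>T. e dvd (s1 div gcd s1 y + y div gcd s1 y)"
  proof
    fix y assume "y \<in> T"
    hence "y div gcd s1 y + s1 div gcd s1 y \<in> Lset" unfolding Lset_def by blast
    hence "e dvd y div gcd s1 y + s1 div gcd s1 y" unfolding e_def by (rule Gcd_dvd)
    thus "e dvd (s1 div gcd s1 y + y div gcd s1 y)" by (simp add: add.commute)
  qed
  have h2: "\<forall>x\<in>S. e dvd (x div gcd x t1 + t1 div gcd x t1)"
  proof
    fix x assume "x \<in> S"
    hence "t1 div gcd x t1 + x div gcd x t1 \<in> Lset" unfolding Lset_def by blast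
    hence "e dvd t1 div gcd x t1 + x div gcd x t1" unfolding e_def by (rule Gcd_dvd)
    thus "e dvd (x div gcd x t1 + t1 div gcd x t1)" by (simp add: add.commute)
  qed
  show ?thesis unfolding d_def e_def[symmetric] by (rule nt_main[OF finS finT s1S t1T S0 T0 epos h1 h2])
qed

lemma closed_walks: "\<exists>C0. \<forall>v\<in>{1..n}. \<forall>c\<ge>C0. g dvd c \<longrightarrow> bpow n A c v v"
proof -
  obtain K where K: "\<forall>X. 0 \<in> X \<and> (\<forall>a\<in>X. \<forall>b\<in>X. a+b \<in> X) \<and> Lset \<subseteq> X \<longrightarrow>
             (\<forall>m\<ge>K. Gcd Lset dvd m \<longrightarrow> m \<in> X)" using frob[OF Lset_fin] by (rule exE)
  have "bpow n A c v v" if v: "v \<in> {1..n}" and c: "c \<ge> K" "g dvd c" for v c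
  proof -
    define X where "X = {c. bpow n A c v v}"
    have c0: "0 \<in> X \<and> (\<forall>a\<in>X. \<forall>b\<in>X. a+b \<in> X) \<and> Lset \<subseteq> X"
      unfolding X_def using bpow_zero[OF v] bpow_concat Lset_closed[OF _ v] by auto
    have "Gcd Lset dvd c" using Lset_gcd_dvd c(2) by (rule dvd_trans)
    with K c0 c(1) have "c \<in> X" by blast
    thus ?thesis by (simp add: X_def)
  qed
  thus ?thesis by blast
qed

definition up_m :: "nat \<Rightarrow> bool" where
  "up_m c \<longleftrightarrow> (\<forall>p. 1 \<le> p \<longrightarrow> p + c \<le> n \<longrightarrow> R p (p + c))"
definition dn_m :: "nat \<Rightarrow> bool" where
  "dn_m c \<longleftrightarrow> (\<forall>p. p \<le> n \<longrightarrow> c < p \<longrightarrow> R p (p - c))"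

lemma greedyR:
  assumes "up_m a" "dn_m b" "a + b \<le> n" "p \<in> {1..n}"
    "int p + int u * int a - int w * int b \<in> {1..int n}"
  shows "R p (nat (int p + int u * int a - int w * int b))"
proof -
  have "(\<lambda>(m::nat) p q. R p q) (u*0 + w*0) p (nat (int p + int u * int a - int w * int b))"
  proof (rule greedy[where n=n and x=a and y=b])
    show "\<And>p. p \<in> {1..n} \<Longrightarrow> R p p" using bpow_zero by blast
    show "\<And>a b p q r. R p q \<Longrightarrow> R q r \<Longrightarrow> R p r" by (rule R_trans)
    show "\<And>p. 1 \<le> p \<Longrightarrow> p + a \<le> n \<Longrightarrow> R p (p + a)" using assms(1) by (simp add: up_m_def)
    show "\<And>p. p \<le> n \<Longrightarrow> b < p \<Longrightarrow> R p (p - b)" using assms(2) by (simp add: dn_m_def)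
  qed (use assms in auto)
  thus ?thesis by simp
qed

lemma macro_gcd:
  assumes "up_m a" "dn_m b" "a + b \<le> n" "a > 0" "b > 0"
  shows "up_m (gcd a b) \<and> dn_m (gcd a b)"
proof
  show "up_m (gcd a b)" unfolding up_m_def
  proof (intro allI impI)
    fix p assume p: "1 \<le> p" "p + gcd a b \<le> n"
    obtain u w where uw: "a * u = b * w + gcd a b" using bezout_nat[of a b] assms(4) by auto
    have "int u * int a - int w * int b = int (gcd a b)"
      using arg_cong[OF uw, of int] by (simp add: algebra_simps)
    hence e: "int p + int u * int a - int w * int b = int (p + gcd a b)" by simp
    have "R p (nat (int p + int u * int a - int w * int b))"
      by (rule greedyR[OF assms(1,2,3)]) (use p e in auto)
    moreover have "nat (int p + int u * int a - int w * int b) = p + gcd a b" unfolding e by simp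
    ultimately show "R p (p + gcd a b)" by simp
  qed
  show "dn_m (gcd a b)" unfolding dn_m_def
  proof (intro allI impI)
    fix p assume p: "p \<le> n" "gcd a b < p"
    obtain u w where uw: "b * w = a * u + gcd b a" using bezout_nat[of b a] assms(5) by auto
    have "int u * int a - int w * int b = - int (gcd a b)"
      using arg_cong[OF uw, of int] by (simp add: algebra_simps gcd.commute)
    hence e: "int p + int u * int a - int w * int b = int (p - gcd a b)" using p by (simp add: of_nat_diff)
    have "R p (nat (int p + int u * int a - int w * int b))"
      by (rule greedyR[OF assms(1,2,3)]) (use p e in auto)
    moreover have "nat (int p + int u * int a - int w * int b) = p - gcd a b" unfolding e by simp
    ultimately show "R p (p - gcd a b)" by simp
  qed
qed

lemma up_edge: "x \<in> S \<Longrightarrow> up_m x"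
  unfolding up_m_def using step_up by blast
lemma dn_edge: "y \<in> T \<Longrightarrow> dn_m y"
  unfolding dn_m_def using step_dn by blast

lemma fold_macro:
  assumes "finite F" "F \<subseteq> S \<union> T"
  shows "\<exists>\<gamma>. up_m \<gamma> \<and> dn_m \<gamma> \<and> \<gamma> > 0 \<and> \<gamma> dvd s1 \<and> \<gamma> dvd t1 \<and> (\<forall>z\<in>F. \<gamma> dvd z)"
  using assms
proof (induction rule: finite_induct)
  case empty
  have "up_m (gcd s1 t1) \<and> dn_m (gcd s1 t1)"
    by (rule macro_gcd[OF up_edge[OF s1S] dn_edge[OF t1T] s1t1 s1pos t1pos])
  then show ?case using s1pos by (intro exI[of _ "gcd s1 t1"]) auto
next
  case (insert z F)
  then obtain \<gamma> where g: "up_m \<gamma>" "dn_m \<gamma>" "\<gamma> > 0" "\<gamma> dvd s1" "\<gamma> dvd t1" "\<forall>z\<in>F. \<gamma> dvd z"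
    by auto
  have gs: "\<gamma> \<le> s1" using g(4) s1pos by (simp add: dvd_imp_le)
  have gt: "\<gamma> \<le> t1" using g(5) t1pos by (simp add: dvd_imp_le)
  obtain c where c: "up_m c" "dn_m c" "c > 0" "c dvd z" "\<gamma> + c \<le> n"
  proof (cases "z \<in> T")
    case True
    have zpos: "z > 0" using True T0 by (cases z) auto
    have m: "up_m (gcd s1 z) \<and> dn_m (gcd s1 z)"
      by (rule macro_gcd[OF up_edge[OF s1S] dn_edge[OF True] yT[OF True] s1pos zpos])
    have "gcd s1 z \<le> s1" using s1pos by (simp add: gcd_le1_nat)
    hence "\<gamma> + gcd s1 z \<le> n" using gt s1t1 by simp
    then show ?thesis using that[of "gcd s1 z"] m s1pos by simp
  next
    case False
    hence zS: "z \<in> S" using insert.prems by auto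
    have zpos: "z > 0" using zS S0 by (cases z) auto
    have m: "up_m (gcd z t1) \<and> dn_m (gcd z t1)"
      by (rule macro_gcd[OF up_edge[OF zS] dn_edge[OF t1T] xS[OF zS] zpos t1pos])
    have "gcd z t1 \<le> t1" using t1pos by (simp add: gcd_le2_nat)
    hence "\<gamma> + gcd z t1 \<le> n" using gs s1t1 by simp
    then show ?thesis using that[of "gcd z t1"] m zpos by simp
  qed
  have m: "up_m (gcd \<gamma> c) \<and> dn_m (gcd \<gamma> c)"
    by (rule macro_gcd[OF g(1) c(2) c(5) g(3) c(3)])
  show ?case
  proof (intro exI[of _ "gcd \<gamma> c"] conjI)
    show "up_m (gcd \<gamma> c)" "dn_m (gcd \<gamma> c)" using m by auto
    show "gcd \<gamma> c > 0" using g(3) by simp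
    show "gcd \<gamma> c dvd s1" using g(4) by (meson dvd_trans gcd_dvd1)
    show "gcd \<gamma> c dvd t1" using g(5) by (meson dvd_trans gcd_dvd1)
    show "\<forall>z'\<in>insert z F. gcd \<gamma> c dvd z'"
    proof
      fix z' assume "z' \<in> insert z F"
      then show "gcd \<gamma> c dvd z'"
      proof
        assume "z' = z" thus ?thesis using c(4) by (meson dvd_trans gcd_dvd2)
      next
        assume "z' \<in> F" thus ?thesis using g(6) by (meson dvd_trans gcd_dvd1)
      qed
    qed
  qed
qed

lemma macro_reach_up:
  assumes "up_m c" shows "1 \<le> i \<Longrightarrow> i + j * c \<le> n \<Longrightarrow> R i (i + j * c)"
proof (induction j)
  case 0
  hence "bpow n A 0 i i" by (simp add: bid_def)
  hence "R i i" by (rule exI)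
  thus ?case by simp
next
  case (Suc j)
  hence "R i (i + j * c)" by simp
  moreover have "R (i + j * c) (i + j * c + c)"
  proof -
    have "1 \<le> i + j * c \<longrightarrow> i + j * c + c \<le> n \<longrightarrow> R (i + j * c) (i + j * c + c)"
      using assms unfolding up_m_def by blast
    moreover have "i + j * c + c \<le> n" using Suc.prems by simp
    ultimately show ?thesis using Suc.prems by simp
  qed
  ultimately have "R i (i + j * c + c)" by (rule R_trans)
  thus ?case by (simp add: algebra_simps)
qed

lemma macro_reach_dn:
  assumes "dn_m c" shows "i \<le> n \<Longrightarrow> j * c < i \<Longrightarrow> R i (i - j * c)"
proof (induction j)
  case 0
  hence "bpow n A 0 i i" by (simp add: bid_def)
  hence "R i i" by (rule exI)
  thus ?case by simp
next
  case (Suc j)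
  hence "R i (i - j * c)" by simp
  moreover have "R (i - j * c) (i - j * c - c)"
  proof -
    have "i - j * c \<le> n \<longrightarrow> c < i - j * c \<longrightarrow> R (i - j * c) (i - j * c - c)"
      using assms unfolding dn_m_def by blast
    moreover have "c < i - j * c" using Suc.prems by simp
    ultimately show ?thesis using Suc.prems by simp
  qed
  ultimately show ?case using R_trans by (simp add: diff_diff_add add.commute)
qed

lemma connect: "i \<in> {1..n} \<Longrightarrow> k \<in> {1..n} \<Longrightarrow> int (gcd d s1) dvd int k - int i \<Longrightarrow> R i k"
proof -
  assume i: "i \<in> {1..n}" and k: "k \<in> {1..n}" and dv: "int (gcd d s1) dvd int k - int i"
  obtain \<gamma> where g: "up_m \<gamma>" "dn_m \<gamma>" "\<gamma> > 0" "\<gamma> dvd s1" "\<gamma> dvd t1" "\<forall>z\<in>S \<union> T. \<gamma> dvd z"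
    using fold_macro[of "S \<union> T"] finS finT by auto
  have "\<gamma> dvd d" unfolding d_def
  proof (rule Gcd_greatest)
    fix z assume "z \<in> {s + t |s t. s \<in> S \<and> t \<in> T}"
    then obtain s t where "z = s + t" "s \<in> S" "t \<in> T" by auto
    thus "\<gamma> dvd z" using g(6) by auto
  qed
  hence "\<gamma> dvd gcd d s1" using g(4) by simp
  hence "int \<gamma> dvd int k - int i" using dv by (meson dvd_trans of_nat_dvd_iff)
  then obtain q where q: "int k - int i = int \<gamma> * q" by (rule dvdE)
  show "R i k"
  proof (cases "i \<le> k")
    case True
    hence "0 \<le> int \<gamma> * q" using q by simp
    hence "q \<ge> 0" using g(3) by (simp add: zero_le_mult_iff)
    then obtain j where j: "q = int j" using nonneg_eq_int by blast
    hence "int k = int (i + j * \<gamma>)" using q by (simp add: algebra_simps)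
    hence "k = i + j * \<gamma>" by (simp only: of_nat_eq_iff)
    thus ?thesis using macro_reach_up[OF g(1), of i j] i k by auto
  next
    case False
    hence "0 \<le> int \<gamma> * (-q)" using q by simp
    hence "-q \<ge> 0" using g(3) by (simp add: mult_le_0_iff)
    then obtain j where j: "-q = int j" using nonneg_eq_int by blast
    hence "q = - int j" by simp
    hence "int i = int (k + j * \<gamma>)" using q by (simp add: algebra_simps)
    hence "i = k + j * \<gamma>" by (simp only: of_nat_eq_iff)
    thus ?thesis using macro_reach_dn[OF g(2), of i j] i k by auto
  qed
qed

end


context tz
begin

lemma g_dvd: "d dvd c * s1 \<Longrightarrow> g dvd c"
proof -
  assume h: "d dvd c * s1"
  define d' where "d' = gcd d s1"
  have dpos: "d > 0" by (rule d_pos)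
  have d'pos: "d' > 0" using dpos by (simp add: d'_def)
  have cop: "coprime g (s1 div d')" using div_gcd_coprime[of d s1] dpos by (simp add: d'_def)
  have dd: "d = d' * g" by (simp add: d'_def)
  have ss: "s1 = d' * (s1 div d')" by (simp add: d'_def)
  have "d' * g dvd d' * (c * (s1 div d'))" using h dd ss by (metis mult.left_commute)
  hence "g dvd c * (s1 div d')" using d'pos by simp
  thus "g dvd c" using cop by (simp add: coprime_dvd_mult_left_iff)
qed

lemma dvd_gs: "d dvd g * s1"
proof -
  define d' where "d' = gcd d s1"
  have "g * s1 = (d div d') * s1" by (simp add: d'_def)
  also have "... = d * (s1 div d')" by (simp add: d'_def div_mult_swap dvd_div_mult)
  finally show ?thesis by simp
qed

lemma g_pos: "g > 0"
proof -
  have e: "d = gcd d s1 * g" by simp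
  show ?thesis
  proof (rule ccontr)
    assume "\<not> g > 0"
    hence "g = 0" by simp
    with e have "d = 0" by (metis mult_0_right)
    with d_pos show False by (metis less_irrefl)
  qed
qed

lemma int_g_dvd: "int d dvd int c * int s1 \<Longrightarrow> g dvd c"
  by (rule g_dvd) (metis of_nat_dvd_iff of_nat_mult)

end


context tz
begin

lemma reach: "\<exists>M. \<forall>m\<ge>M. \<forall>i\<in>{1..n}. \<forall>k\<in>{1..n}.
     int d dvd int k - int i - int m * int s1 \<longrightarrow> bpow n A m i k"
proof -
  obtain C0 where C0: "\<forall>v\<in>{1..n}. \<forall>c\<ge>C0. g dvd c \<longrightarrow> bpow n A c v v"
    using closed_walks by blast
  define P where "P = {(i, k). i \<in> {1..n} \<and> k \<in> {1..n} \<and> int (gcd d s1) dvd int k - int i}"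
  define a where "a = (\<lambda>(i, k). SOME m. bpow n A m i k)"
  have finP: "finite P" unfolding P_def
    by (rule finite_subset[of _ "{1..n} \<times> {1..n}"]) auto
  define B where "B = Max (a ` P)"
  have aP: "bpow n A (a (i, k)) i k \<and> a (i, k) \<le> B" if "(i, k) \<in> P" for i k
  proof
    have "R i k" using connect that unfolding P_def by auto
    thus "bpow n A (a (i, k)) i k" unfolding a_def by (simp only: prod.case) (rule someI_ex)
    show "a (i, k) \<le> B" unfolding B_def using finP that by simp
  qed
  show ?thesis
  proof (intro exI[of _ "B + C0"] allI impI ballI)
    fix m i k assume m: "B + C0 \<le> m" and i: "i \<in> {1..n}" and k: "k \<in> {1..n}"
      and h: "int d dvd int k - int i - int m * int s1"
    have "int (gcd d s1) dvd int d" by simp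
    hence h1: "int (gcd d s1) dvd int k - int i - int m * int s1" using h by (rule dvd_trans)
    have h2: "int (gcd d s1) dvd int m * int s1" by simp
    have "int (gcd d s1) dvd (int k - int i - int m * int s1) + int m * int s1"
      using h1 h2 by (rule dvd_add)
    hence "(i, k) \<in> P" unfolding P_def using i k by simp
    from aP[OF this] have w: "bpow n A (a (i, k)) i k" and aB: "a (i, k) \<le> B" by auto
    define a0 where "a0 = a (i, k)"
    have n1: "int d dvd int k - int i - int a0 * int s1" using necessity[OF w] by (simp add: a0_def)
    have "int d dvd (int k - int i - int a0 * int s1) - (int k - int i - int m * int s1)"
      using n1 h by (rule dvd_diff)
    hence "int d dvd int (m - a0) * int s1" using aB m by (simp add: a0_def of_nat_diff algebra_simps)
    hence "g dvd (m - a0)" by (rule int_g_dvd)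
    moreover have "m - a0 \<ge> C0" using aB m by (simp add: a0_def)
    ultimately have "bpow n A (m - a0) i i" using C0 i by blast
    from bpow_concat[OF this w[folded a0_def]] show "bpow n A m i k" using aB m by (simp add: a0_def)
  qed
qed

lemma char: "\<exists>M. \<forall>m\<ge>M. \<forall>i k. bpow n A m i k \<longleftrightarrow>
    (i \<in> {1..n} \<and> k \<in> {1..n} \<and> int d dvd int k - int i - int m * int s1)"
proof -
  obtain M where M: "\<forall>m\<ge>M. \<forall>i\<in>{1..n}. \<forall>k\<in>{1..n}.
     int d dvd int k - int i - int m * int s1 \<longrightarrow> bpow n A m i k" using reach by blast
  show ?thesis
  proof (intro exI[of _ M] allI impI iffI)
    fix m i k assume "M \<le> m"
    {
      assume b: "bpow n A m i k"
      show "i \<in> {1..n} \<and> k \<in> {1..n} \<and> int d dvd int k - int i - int m * int s1"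
        using bpow_range[OF b] necessity[OF b] by blast
    }
    {
      assume h: "i \<in> {1..n} \<and> k \<in> {1..n} \<and> int d dvd int k - int i - int m * int s1"
      show "bpow n A m i k" using M \<open>M \<le> m\<close> h by blast
    }
  qed
qed

lemma residue: "\<exists>k\<in>{1..d}. int d dvd int k - 1 - int X"
proof
  show "X mod d + 1 \<in> {1..d}" using d_pos by (simp add: Suc_leI)
  have "X = d * (X div d) + X mod d" by simp
  hence "int X = int d * int (X div d) + int (X mod d)" by (metis of_nat_add of_nat_mult)
  hence "int (X mod d + 1) - 1 - int X = - (int d * int (X div d))" by simp
  thus "int d dvd int (X mod d + 1) - 1 - int X" by simp
qed

end


context tz
begin

lemma compm_char: "\<exists>M. \<forall>m\<ge>M. \<forall>i j. compm n A m i j \<longleftrightarrow>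
    (i \<in> {1..n} \<and> j \<in> {1..n} \<and> int d dvd int i - int j)"
proof -
  obtain M where M: "\<forall>m\<ge>M. \<forall>i k. bpow n A m i k \<longleftrightarrow>
    (i \<in> {1..n} \<and> k \<in> {1..n} \<and> int d dvd int k - int i - int m * int s1)" using char by blast
  show ?thesis
  proof (intro exI[of _ M] allI impI)
    fix m i j assume m: "M \<le> m"
    have Mm: "\<And>i k. bpow n A m i k \<longleftrightarrow>
       (i \<in> {1..n} \<and> k \<in> {1..n} \<and> int d dvd int k - int i - int m * int s1)" using M m by blast
    have cm: "compm n A m i j \<longleftrightarrow> i \<in> {1..n} \<and> j \<in> {1..n} \<and>
         (\<exists>k\<in>{1..n}. bpow n A m i k \<and> bpow n A m j k)"
      unfolding compm_def bmult_def bpow_btrans by (simp add: btrans_def)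
    show "compm n A m i j \<longleftrightarrow> (i \<in> {1..n} \<and> j \<in> {1..n} \<and> int d dvd int i - int j)"
    proof
      assume "compm n A m i j"
      then obtain k where k: "i \<in> {1..n}" "j \<in> {1..n}" "bpow n A m i k" "bpow n A m j k"
        using cm by blast
      have a: "int d dvd int k - int i - int m * int s1" using Mm k(3) by blast
      have b: "int d dvd int k - int j - int m * int s1" using Mm k(4) by blast
      have "int d dvd (int k - int j - int m * int s1) - (int k - int i - int m * int s1)"
        using b a by (rule dvd_diff)
      thus "i \<in> {1..n} \<and> j \<in> {1..n} \<and> int d dvd int i - int j" using k by simp
    next
      assume h: "i \<in> {1..n} \<and> j \<in> {1..n} \<and> int d dvd int i - int j"
      obtain k where k: "k \<in> {1..d}" "int d dvd int k - 1 - int (i - 1 + m * s1)"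
        using residue by blast
      have "int (i - 1 + m * s1) = int i - 1 + int m * int s1" using h by (simp add: of_nat_diff)
      hence a: "int d dvd int k - int i - int m * int s1" using k(2) by (simp add: algebra_simps)
      have hij: "int d dvd int i - int j" using h by blast
      have "int d dvd (int k - int i - int m * int s1) + (int i - int j)" by (rule dvd_add[OF a hij])
      moreover have "(int k - int i - int m * int s1) + (int i - int j) = int k - int j - int m * int s1" by simp
      ultimately have b: "int d dvd int k - int j - int m * int s1" by simp
      have kn: "k \<in> {1..n}" using k(1) d_le by auto
      have "bpow n A m i k" using Mm h kn a by blast
      moreover have "bpow n A m j k" using Mm h kn b by blast
      ultimately show "compm n A m i j" using cm h kn by blast
    qed
  qed
qed

lemma matrix_period: "is_matrix_period n A g"
proof -
  obtain M where M: "\<forall>m\<ge>M. \<forall>i k. bpow n A m i k \<longleftrightarrow>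
    (i \<in> {1..n} \<and> k \<in> {1..n} \<and> int d dvd int k - int i - int m * int s1)" using char by blast
  have g1: "g \<ge> 1" using g_pos by simp
  have dg: "int d dvd int g * int s1" using dvd_gs by (metis of_nat_dvd_iff of_nat_mult)
  have per: "\<forall>m\<ge>M. bpow n A m = bpow n A (m + g)"
  proof (intro allI impI ext)
    fix m i k assume m: "M \<le> m"
    have e: "int k - int i - int (m + g) * int s1 = (int k - int i - int m * int s1) - int g * int s1"
      by (simp add: algebra_simps)
    have "int d dvd int k - int i - int (m + g) * int s1 \<longleftrightarrow> int d dvd int k - int i - int m * int s1"
      unfolding e
    proof
      assume "int d dvd int k - int i - int m * int s1 - int g * int s1"
      from dvd_add[OF this dg] show "int d dvd int k - int i - int m * int s1" by simp
    next
      assume "int d dvd int k - int i - int m * int s1"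
      from dvd_diff[OF this dg] show "int d dvd int k - int i - int m * int s1 - int g * int s1" .
    qed
    moreover have "bpow n A m i k \<longleftrightarrow>
      (i \<in> {1..n} \<and> k \<in> {1..n} \<and> int d dvd int k - int i - int m * int s1)" using M m by blast
    moreover have "bpow n A (m + g) i k \<longleftrightarrow>
      (i \<in> {1..n} \<and> k \<in> {1..n} \<and> int d dvd int k - int i - int (m + g) * int s1)"
      using M m by (meson le_add1 order_trans)
    ultimately show "bpow n A m i k = bpow n A (m + g) i k" by blast
  qed
  have minimal: "\<not> (\<exists>M'. \<forall>m\<ge>M'. bpow n A m = bpow n A (m + p'))" if p': "1 \<le> p'" "p' < g" for p'
  proof
    assume "\<exists>M'. \<forall>m\<ge>M'. bpow n A m = bpow n A (m + p')"
    then obtain M' where M': "\<forall>m\<ge>M'. bpow n A m = bpow n A (m + p')" by blast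
    define m where "m = max M M'"
    obtain k where k: "k \<in> {1..d}" "int d dvd int k - 1 - int (0 + m * s1)"
      using residue by blast
    have kn: "k \<in> {1..n}" using k(1) d_le by auto
    have n1: "1 \<in> {1..n}" using n2 by simp
    have mM: "m \<ge> M" and mM': "m \<ge> M'" by (simp_all add: m_def)
    have Mm: "bpow n A m 1 k \<longleftrightarrow>
      (1 \<in> {1..n} \<and> k \<in> {1..n} \<and> int d dvd int k - int 1 - int m * int s1)" using M mM by blast
    have "int k - int 1 - int m * int s1 = int k - 1 - int (0 + m * s1)" by simp
    hence "bpow n A m 1 k" using Mm kn n1 k(2) by simp
    moreover have "bpow n A m = bpow n A (m + p')" using M' mM' by blast
    ultimately have b2: "bpow n A (m + p') 1 k" by simp
    have "bpow n A (m + p') 1 k \<longleftrightarrow>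
      (1 \<in> {1..n} \<and> k \<in> {1..n} \<and> int d dvd int k - int 1 - int (m + p') * int s1)"
      using M mM by (meson le_add1 order_trans)
    hence k2: "int d dvd int k - 1 - int (m + p') * int s1" using b2 by simp
    have "int d dvd (int k - 1 - int (0 + m * s1)) - (int k - 1 - int (m + p') * int s1)"
      using k(2) k2 by (rule dvd_diff)
    hence "int d dvd int p' * int s1" by (simp add: algebra_simps)
    hence "g dvd p'" by (rule int_g_dvd)
    hence "g \<le> p'" using p' by (simp add: dvd_imp_le)
    thus False using p' by simp
  qed
  show ?thesis unfolding is_matrix_period_def using g1 per minimal by blast
qed

lemma competition: "is_competition_period n A 1"
proof -
  obtain M where M: "\<forall>m\<ge>M. \<forall>i j. compm n A m i j \<longleftrightarrow>
    (i \<in> {1..n} \<and> j \<in> {1..n} \<and> int d dvd int i - int j)" using compm_char by blast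
  define C where "C = (\<lambda>i j. i \<in> {1..n} \<and> j \<in> {1..n} \<and> int d dvd int i - int j)"
  have MC: "compm n A m = C" if "m \<ge> M" for m using M that unfolding C_def by blast
  define P where "P = (\<lambda>q. q \<ge> 1 \<and> (\<exists>r\<ge>1. \<forall>i. compm n A (q + i) = compm n A (q + r + i)))"
  have PM: "P (M + 1)" unfolding P_def using MC by (intro conjI exI[of _ 1]) auto
  define q where "q = (LEAST q. P q)"
  have Pq: "P q" unfolding q_def using PM by (rule LeastI)
  have qmin: "\<not> P q'" if "q' < q" for q' unfolding q_def using not_less_Least that q_def by blast
  have idx: "is_competition_index n A q"
    unfolding is_competition_index_def using Pq qmin unfolding P_def by blast
  obtain r where r: "r \<ge> 1" "\<forall>i. compm n A (q + i) = compm n A (q + r + i)" using Pq P_def by blast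
  have rep: "compm n A (q + i) = compm n A (q + k * r + i)" for k i
  proof (induction k arbitrary: i)
    case 0 then show ?case by simp
  next
    case (Suc k)
    have "compm n A (q + i) = compm n A (q + k * r + i)" using Suc.IH .
    also have "... = compm n A (q + r + (k * r + i))" using r(2) by (metis add.assoc)
    finally show ?case by (simp add: algebra_simps)
  qed
  have "M * r \<ge> M" using r(1) by simp
  have "compm n A q = compm n A (q + M * r + 0)" using rep[of 0 M] by simp
  also have "... = C" using MC[of "q + M * r + 0"] \<open>M * r \<ge> M\<close> by simp
  finally have c0: "compm n A q = C" .
  have "compm n A (q + 1) = compm n A (q + M * r + 1)" using rep[of 1 M] by simp
  also have "... = C" using MC[of "q + M * r + 1"] \<open>M * r \<ge> M\<close> by simp
  finally have c1: "compm n A (q + 1) = C" .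
  show ?thesis unfolding is_competition_period_def using idx c0 c1 by auto
qed

end


lemma block_perm:
  fixes n d :: nat
  assumes dpos: "0 < d"
  defines "ms \<equiv> (\<lambda>b. card {v\<in>{1..n}. v mod d = b mod d})"
  shows "\<exists>\<sigma>. bij_betw \<sigma> {1..n} {1..n} \<and>
     (\<forall>i\<in>{1..n}. \<forall>j\<in>{1..n}. (\<sigma> i mod d = \<sigma> j mod d \<longleftrightarrow> block_of ms i = block_of ms j))"
proof -
  define N where "N = {1..n::nat}"
  have finN: "finite N" by (simp add: N_def)
  define cls where "cls = (\<lambda>v::nat. if v mod d = 0 then d else v mod d)"
  have cls_range: "1 \<le> cls v \<and> cls v \<le> d" for v
    using dpos by (auto simp: cls_def less_imp_le)
  have cls_eq: "cls u = cls v \<longleftrightarrow> u mod d = v mod d" for u v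
    using dpos by (auto simp: cls_def) (metis less_irrefl mod_less_divisor)+
  have cls_iff: "v mod d = c mod d \<longleftrightarrow> cls v = c" if "c \<in> {1..d}" for v c
  proof (cases "c = d")
    case True then show ?thesis using dpos by (auto simp: cls_def) (metis less_irrefl mod_less_divisor)+
  next
    case False
    hence "c < d" "c \<ge> 1" using that by auto
    hence "c mod d = c" by simp
    then show ?thesis using \<open>c < d\<close> \<open>c \<ge> 1\<close> by (auto simp: cls_def)
  qed
  define Lt where "Lt v = {u\<in>N. cls u < cls v}" for v
  define Eq where "Eq v = {u\<in>N. cls u = cls v \<and> u \<le> v}" for v
  define Le where "Le c = {u\<in>N. cls u \<le> c}" for c
  define \<tau> where "\<tau> v = card (Lt v) + card (Eq v)" for v
  have finLt: "finite (Lt v)" for v using finN by (simp add: Lt_def)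
  have finEq: "finite (Eq v)" for v using finN by (simp add: Eq_def)
  have finLe: "finite (Le c)" for c using finN by (simp add: Le_def)
  have t1: "card (Lt v) < \<tau> v" if "v \<in> N" for v
  proof -
    have "v \<in> Eq v" using that by (simp add: Eq_def)
    hence "card (Eq v) > 0" using finEq[of v] card_gt_0_iff by blast
    thus ?thesis by (simp add: \<tau>_def)
  qed
  have t2: "\<tau> v \<le> card (Le (cls v))" for v
  proof -
    have "Lt v \<inter> Eq v = {}" by (auto simp: Lt_def Eq_def)
    hence "card (Lt v \<union> Eq v) = \<tau> v" using finLt finEq by (simp add: card_Un_disjoint \<tau>_def)
    moreover have "Lt v \<union> Eq v \<subseteq> Le (cls v)" by (auto simp: Lt_def Eq_def Le_def)
    ultimately show ?thesis using finLe card_mono by metis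
  qed
  have t3: "card (Le c) \<le> card (Lt v)" if "c < cls v" for c v
  proof -
    have "Le c \<subseteq> Lt v" using that by (auto simp: Lt_def Le_def)
    thus ?thesis using finLt card_mono by metis
  qed
  have mono1: "\<tau> u < \<tau> v" if "u \<in> N" "v \<in> N" "cls u < cls v" for u v
    using t2[of u] t3[OF that(3)] t1[OF that(2)] by linarith
  have mono2: "\<tau> u < \<tau> v" if "u \<in> N" "v \<in> N" "cls u = cls v" "u < v" for u v
  proof -
    have "Lt u = Lt v" using that(3) by (simp add: Lt_def)
    moreover have "Eq u \<subset> Eq v"
    proof
      show "Eq u \<subseteq> Eq v" using that(3,4) by (auto simp: Eq_def)
      show "Eq u \<noteq> Eq v"
      proof
        assume e: "Eq u = Eq v"
        have "v \<in> Eq v" using that(2) by (simp add: Eq_def)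
        hence "v \<in> Eq u" using e by simp
        hence "v \<le> u" by (simp add: Eq_def)
        with that(4) show False by simp
      qed
    qed
    hence "card (Eq u) < card (Eq v)" using finEq[of v] by (simp add: psubset_card_mono)
    ultimately show ?thesis by (simp add: \<tau>_def)
  qed
  have inj: "inj_on \<tau> N"
  proof (rule inj_onI)
    fix u v assume uv: "u \<in> N" "v \<in> N" "\<tau> u = \<tau> v"
    show "u = v"
    proof (rule ccontr)
      assume "u \<noteq> v"
      consider "cls u < cls v" | "cls v < cls u" | "cls u = cls v \<and> u < v" | "cls u = cls v \<and> v < u"
        using \<open>u \<noteq> v\<close> by (metis linorder_neqE_nat)
      then show False
      proof cases
        case 1 with mono1[OF uv(1,2)] uv(3) show False by simp
      next
        case 2 with mono1[OF uv(2,1)] uv(3) show False by simp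
      next
        case 3 with mono2[OF uv(1,2)] uv(3) show False by simp
      next
        case 4 with mono2[OF uv(2,1)] uv(3) show False by simp
      qed
    qed
  qed
  have into: "\<tau> ` N \<subseteq> N"
  proof
    fix w assume "w \<in> \<tau> ` N"
    then obtain v where v: "v \<in> N" "w = \<tau> v" by blast
    have "1 \<le> \<tau> v" using t1[OF v(1)] by simp
    moreover have "card (Le (cls v)) \<le> card N" using finN by (intro card_mono) (auto simp: Le_def)
    ultimately show "w \<in> N" using t2[of v] v by (simp add: N_def)
  qed
  have onto: "\<tau> ` N = N" by (rule endo_inj_surj[OF finN into inj])
  have bij: "bij_betw \<tau> N N" using inj onto by (simp add: bij_betw_def)
  define \<sigma> where "\<sigma> = inv_into N \<tau>"
  have bijs: "bij_betw \<sigma> N N" unfolding \<sigma>_def by (rule bij_betw_inv_into[OF bij])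
  have ts: "\<tau> (\<sigma> i) = i" if "i \<in> N" for i
    unfolding \<sigma>_def using that onto by (simp add: f_inv_into_f)
  have sN: "\<sigma> i \<in> N" if "i \<in> N" for i using bijs that by (meson bij_betwE)
  have sumL: "(\<Sum>c=1..b. ms c) = card (Le b)" if "b \<le> d" for b
    using that
  proof (induction b)
    case 0
    have "cls u \<noteq> 0" for u using cls_range[of u] by simp
    hence "Le 0 = {}" by (auto simp: Le_def)
    then show ?case by simp
  next
    case (Suc b)
    have "Le (Suc b) = Le b \<union> {u\<in>N. cls u = Suc b}" by (auto simp: Le_def)
    moreover have "Le b \<inter> {u\<in>N. cls u = Suc b} = {}" by (auto simp: Le_def)
    ultimately have "card (Le (Suc b)) = card (Le b) + card {u\<in>N. cls u = Suc b}"
      using finLe finN by (simp add: card_Un_disjoint)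
    moreover have "ms (Suc b) = card {u\<in>N. cls u = Suc b}"
    proof -
      have "{v\<in>{1..n}. v mod d = Suc b mod d} = {u\<in>N. cls u = Suc b}"
        using cls_iff[of "Suc b"] Suc.prems by (auto simp: N_def)
      thus ?thesis by (simp add: ms_def)
    qed
    ultimately show ?case using Suc by simp
  qed
  have blk: "block_of ms (\<tau> v) = cls v" if "v \<in> N" for v
    unfolding block_of_def
  proof (rule Least_equality)
    show "\<tau> v \<le> (\<Sum>c=1..cls v. ms c)" using t2[of v] sumL[of "cls v"] cls_range by simp
    fix y assume y: "\<tau> v \<le> (\<Sum>c=1..y. ms c)"
    show "cls v \<le> y"
    proof (rule ccontr)
      assume "\<not> cls v \<le> y"
      hence yl: "y < cls v" by simp
      hence "y \<le> d" using cls_range[of v] by simp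
      hence "(\<Sum>c=1..y. ms c) = card (Le y)" by (rule sumL)
      with y t3[OF yl] t1[OF that] show False by simp
    qed
  qed
  show ?thesis
  proof (intro exI[of _ \<sigma>] conjI ballI)
    show "bij_betw \<sigma> {1..n} {1..n}" using bijs by (simp add: N_def)
    fix i j assume i: "i \<in> {1..n}" and j: "j \<in> {1..n}"
    have "block_of ms i = cls (\<sigma> i)" using blk[OF sN] ts i by (metis N_def)
    moreover have "block_of ms j = cls (\<sigma> j)" using blk[OF sN] ts j by (metis N_def)
    ultimately show "(\<sigma> i mod d = \<sigma> j mod d) = (block_of ms i = block_of ms j)"
      using cls_eq by simp
  qed
qed


lemma mod_int_dvd: "(a::nat) mod d = b mod d \<longleftrightarrow> int d dvd int a - int b"
proof -
  have "a mod d = b mod d \<longleftrightarrow> int (a mod d) = int (b mod d)" by (simp only: of_nat_eq_iff)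
  also have "\<dots> \<longleftrightarrow> int a mod int d = int b mod int d" by (simp only: of_nat_mod)
  also have "\<dots> \<longleftrightarrow> int d dvd int a - int b" by (rule mod_eq_dvd_iff)
  finally show ?thesis .
qed

theorem corollary2p4:
  fixes n :: nat and S T :: "nat set"
  assumes "n \<ge> 2"
    and "S \<noteq> {}" "S \<subseteq> {1..n-1}" "T \<noteq> {}" "T \<subseteq> {1..n-1}"
    and "Max S + Min T \<le> n" "Min S + Max T \<le> n"
  defines "A \<equiv> toeplitz n S T"
    and "d \<equiv> Gcd {s + t | s t. s \<in> S \<and> t \<in> T}"
  defines "d' \<equiv> gcd d (Min S)"
  shows "is_matrix_period n A (d div d') \<and>
         is_competition_period n A 1 \<and>
         (\<exists>\<sigma>. bij_betw \<sigma> {1..n} {1..n} \<and>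
           (\<exists>M. \<forall>m\<ge>M. \<forall>i\<in>{1..n}. \<forall>j\<in>{1..n}.
              compm n A m (\<sigma> i) (\<sigma> j) =
              blockdiag_ones n (\<lambda>b. card {v\<in>{1..n}. v mod d = b mod d}) i j))"
proof -
  interpret Z: tz n S T using assms(1-7) by unfold_locales
  have dZ: "d = Z.d" unfolding d_def Z.d_def ..
  have P1: "is_matrix_period n A (d div d')"
    using Z.matrix_period unfolding A_def d'_def dZ .
  have P2: "is_competition_period n A 1"
    using Z.competition unfolding A_def .
  define ms where "ms = (\<lambda>b. card {v\<in>{1..n}. v mod d = b mod d})"
  obtain \<sigma> where s: "bij_betw \<sigma> {1..n} {1..n}"
    "\<forall>i\<in>{1..n}. \<forall>j\<in>{1..n}. (\<sigma> i mod d = \<sigma> j mod d \<longleftrightarrow> block_of ms i = block_of ms j)"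
    using block_perm[of d n] Z.d_pos unfolding ms_def dZ by blast
  obtain M where M: "\<forall>m\<ge>M. \<forall>i j. compm n A m i j \<longleftrightarrow>
    (i \<in> {1..n} \<and> j \<in> {1..n} \<and> int d dvd int i - int j)"
    using Z.compm_char unfolding A_def dZ by blast
  have P3: "\<forall>m\<ge>M. \<forall>i\<in>{1..n}. \<forall>j\<in>{1..n}.
              compm n A m (\<sigma> i) (\<sigma> j) = blockdiag_ones n ms i j"
  proof (intro allI impI ballI)
    fix m i j assume m: "M \<le> m" and i: "i \<in> {1..n}" and j: "j \<in> {1..n}"
    have si: "\<sigma> i \<in> {1..n}" and sj: "\<sigma> j \<in> {1..n}" using s(1) i j by (meson bij_betwE)+
    have "compm n A m (\<sigma> i) (\<sigma> j) \<longleftrightarrow> int d dvd int (\<sigma> i) - int (\<sigma> j)"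
      using M m si sj by blast
    also have "\<dots> \<longleftrightarrow> \<sigma> i mod d = \<sigma> j mod d" by (rule mod_int_dvd[symmetric])
    also have "\<dots> \<longleftrightarrow> block_of ms i = block_of ms j" using s(2) i j by blast
    also have "\<dots> \<longleftrightarrow> blockdiag_ones n ms i j" using i j by (simp add: blockdiag_ones_def)
    finally show "compm n A m (\<sigma> i) (\<sigma> j) = blockdiag_ones n ms i j" .
  qed
  show ?thesis using P1 P2 s(1) P3 unfolding ms_def by blast
qed


end
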